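(* Let $f\in\mathbb Z[x]$ be an irreducible polynomial and $\beta$ a root of $f$, and let $P$ be a non-archimedean prime divisor of $\mathbb Q(\beta)$ which is stable. If $g\in O_P[x)$ satisfies $e_P(g)=0$, then $g$ is divisible by $\beta-x$ in $O_P[x)$, i.e. $g=(\beta-x)h$ for some $h\in O_P[x)$.
   Context: A prime divisor $P$ of $\mathbb Q(\beta)$ (an equivalence class of nontrivial absolute values) is stable if $\beta^n\to0$ as $n\to\infty$ in the $P$-topology. $O_P\subset\mathbb Q(\beta)$ is the ring of elements of $P$-absolute value at most $1$, and $K_P$ the completion of $\mathbb Q(\beta)$ at $P$. $O_P[x)$ denotes formal series $\sum_{n\ge m}a_nx^n$, $a_n\in O_P$. For stable $P$, $e_P:O_P[x)\to K_P$ is the evaluation map $\sum a_nx^n\mapsto\sum a_n\beta^n$ (convergent in $K_P$). *)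

theory Defs
  imports "HOL-Analysis.Analysis" "HOL-Computational_Algebra.Polynomial"
    "HOL-Computational_Algebra.Formal_Laurent_Series"
begin

definition abs_value :: "('a::field \<Rightarrow> real) \<Rightarrow> bool" where
  "abs_value v \<longleftrightarrow>
     (\<forall>x. v x \<ge> 0) \<and> (\<forall>x. v x = 0 \<longleftrightarrow> x = 0) \<and>
     (\<forall>x y. v (x * y) = v x * v y) \<and> (\<forall>x y. v (x + y) \<le> v x + v y)"

definition nontrivial_abs_value :: "('a::field \<Rightarrow> real) \<Rightarrow> bool" where
  "nontrivial_abs_value v \<longleftrightarrow> (\<exists>x. x \<noteq> 0 \<and> v x \<noteq> 1)"

definition nonarchimedean :: "('a::field \<Rightarrow> real) \<Rightarrow> bool" where
  "nonarchimedean v \<longleftrightarrow> (\<forall>x y. v (x + y) \<le> max (v x) (v y))"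

definition stable :: "('a::field \<Rightarrow> real) \<Rightarrow> 'a \<Rightarrow> bool" where
  "stable v \<beta> \<longleftrightarrow> (\<lambda>n. v (\<beta> ^ n)) \<longlonglongrightarrow> 0"

definition O_P :: "('a::field \<Rightarrow> real) \<Rightarrow> 'a set" where
  "O_P v = {x. v x \<le> 1}"

text \<open>O_P[x): formal Laurent series (finitely many negative terms) with coefficients in O_P.\<close>
definition OP_laurent :: "('a::field \<Rightarrow> real) \<Rightarrow> 'a fls set" where
  "OP_laurent v = {g. \<forall>n. fls_nth g n \<in> O_P v}"

definition eval_partial :: "'a::field fls \<Rightarrow> 'a \<Rightarrow> nat \<Rightarrow> 'a" where
  "eval_partial g \<beta> N = (\<Sum>n\<in>{fls_subdegree g..int N}. fls_nth g n * \<beta> powi n)"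

text \<open>e_P(g) = 0 in the completion K_P: the partial sums converge to 0 w.r.t. v
  (the absolute value of K_P extends v and K_P contains Q(beta) densely).\<close>
definition eval_zero :: "('a::field \<Rightarrow> real) \<Rightarrow> 'a \<Rightarrow> 'a fls \<Rightarrow> bool" where
  "eval_zero v \<beta> g \<longleftrightarrow> (\<lambda>N. v (eval_partial g \<beta> N)) \<longlonglongrightarrow> 0"

end

theory Submission
  imports Defs
begin

lemma av_basic:
  fixes v :: "'a::field \<Rightarrow> real"
  assumes "abs_value v"
  shows "v 0 = 0" "v 1 = 1" "\<And>x. v (-x) = v x" "\<And>x y. v (x*y) = v x * v y"
    "\<And>x. v (inverse x) = inverse (v x)" "\<And>x. v x \<ge> 0"
proof -
  have m: "\<And>x y. v (x*y) = v x * v y" and z: "\<And>x. v x = 0 \<longleftrightarrow> x = 0"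
    and p: "\<And>x. v x \<ge> 0"
    using assms unfolding abs_value_def by auto
  show "\<And>x y. v (x*y) = v x * v y" by (rule m)
  show "\<And>x. v x \<ge> 0" by (rule p)
  show "v 0 = 0" using z by simp
  have "v 1 = v 1 * v 1" using m[of 1 1] by simp
  moreover have "v 1 \<noteq> 0" using z by simp
  ultimately show v1: "v 1 = 1" by (metis mult_cancel_right1)
  have "v (-1) * v (-1) = 1" using m[of "-1" "-1"] v1 by simp
  hence vm1: "v (-1) = 1" using p[of "-1"]
    by (metis abs_of_nonneg abs_one abs_square_eq_1 power2_eq_square)
  show "\<And>x. v (-x) = v x" using m[of "-1"] vm1 by (metis mult_minus1 mult_1)
  show "\<And>x. v (inverse x) = inverse (v x)"
  proof -
    fix x :: 'a
    show "v (inverse x) = inverse (v x)"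
    proof (cases "x = 0")
      case True then show ?thesis using z[of 0] by simp
    next
      case False
      have "v x * v (inverse x) = 1" using m[of x "inverse x"] False v1 by simp
      then show ?thesis by (metis inverse_unique)
    qed
  qed
qed

lemma av_power: assumes "abs_value v" shows "v (x ^ n) = v x ^ n"
  by (induction n) (simp_all add: av_basic[OF assms])

lemma av_powi: assumes "abs_value v" shows "v (x powi k) = v x powi k"
  by (simp add: power_int_def av_power[OF assms] av_basic[OF assms])

lemma nonarch_sum:
  fixes v :: "'a::field \<Rightarrow> real"
  assumes "abs_value v" "nonarchimedean v" "finite A" "\<forall>k\<in>A. v (f k) \<le> B" "0 \<le> B"
  shows "v (sum f A) \<le> B"
  using assms(3,4)
proof (induction A rule: finite_induct)
  case empty then show ?case using av_basic[OF assms(1)] assms(5) by simp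
next
  case (insert x F)
  have "v (sum f (insert x F)) = v (f x + sum f F)" using insert by simp
  also have "\<dots> \<le> max (v (f x)) (v (sum f F))" using assms(2) nonarchimedean_def by blast
  also have "\<dots> \<le> B" using insert by auto
  finally show ?case .
qed

theorem mainTheorem8:
  fixes f :: "int poly" and \<beta> :: "'a::field_char_0" and v :: "'a \<Rightarrow> real"
    and g :: "'a fls"
  assumes "irreducible f"
    and "poly (map_poly of_int f) \<beta> = 0"
    and "\<forall>y::'a. \<exists>p::rat poly. y = poly (map_poly of_rat p) \<beta>"
    and "abs_value v" and "nontrivial_abs_value v" and "nonarchimedean v"
    and "stable v \<beta>"
    and "g \<in> OP_laurent v"
    and "eval_zero v \<beta> g"
  shows "\<exists>h \<in> OP_laurent v. g = (fls_const \<beta> - fls_X) * h"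
proof (cases "\<beta> = 0")
  case True
  define h where "h = - fls_shift 1 g"
  have "h \<in> OP_laurent v" using assms(8) av_basic(3)[OF assms(4)]
    by (simp add: h_def OP_laurent_def O_P_def)
  moreover have "g = (fls_const \<beta> - fls_X) * h"
    by (simp add: True h_def fls_X_times_conv_shift fls_eq_iff)
  ultimately show ?thesis by blast
next
  case False
  note av = av_basic[OF assms(4)]
  define d where "d = fls_subdegree g"
  define a where "a = fls_nth g"
  define w where "w = v \<beta>"
  have wpos: "w > 0" using False av unfolding w_def abs_value_def using assms(4) abs_value_def
    by (metis less_eq_real_def)
  have w1: "w < 1"
  proof (rule ccontr)
    assume "\<not> w < 1"
    hence "\<forall>n\<ge>0. 1 \<le> v (\<beta> ^ n)" by (simp add: av_power[OF assms(4)] w_def[symmetric] one_le_power)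
    hence "1 \<le> (0::real)" using assms(7) unfolding stable_def
      by (metis LIMSEQ_le_const)
    thus False by simp
  qed
  define P where "P n = (\<Sum>k\<in>{d..n}. a k * \<beta> powi k)" for n
  define hf where "hf n = \<beta> powi (-(n+1)) * P n" for n
  have Pd: "P n = 0" if "n < d" for n using that by (simp add: P_def)
  have hf0: "hf (- int n) = 0" if "n > nat (-d)" for n using that Pd by (simp add: hf_def)
  have ev: "\<forall>\<^sub>\<infinity> n. hf (- int n) = 0"
    unfolding MOST_nat using hf0 by blast
  define h where "h = Abs_fls hf"
  have hn: "fls_nth h n = hf n" for n unfolding h_def using ev by simp
  have Pbound: "v (P n) \<le> w powi (n+1)" if "n \<ge> d" for n
  proof -
    define \<epsilon> where "\<epsilon> = w powi (n+1)"
    have epos: "\<epsilon> > 0" using wpos by (simp add: \<epsilon>_def)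
    obtain N0 where N0: "\<forall>N\<ge>N0. v (eval_partial g \<beta> N) < \<epsilon>"
      using assms(9) epos unfolding eval_zero_def
      by (metis (no_types, lifting) eventually_sequentially order_tendstoD(2))
    define N where "N = max N0 (nat n)"
    have NN: "int N \<ge> n" by (simp add: N_def)
    have vPN: "v (P (int N)) < \<epsilon>" using N0 by (simp add: N_def P_def eval_partial_def d_def a_def)
    define T where "T = (\<Sum>k\<in>{n+1..int N}. a k * \<beta> powi k)"
    have split: "P (int N) = P n + T"
    proof -
      have "{d..int N} = {d..n} \<union> {n+1..int N}" using that NN by auto
      thus ?thesis unfolding P_def T_def by (simp add: sum.union_disjoint)
    qed
    have vT: "v T \<le> \<epsilon>" unfolding T_def
    proof (rule nonarch_sum[OF assms(4,6)])
      show "\<forall>k\<in>{n + 1..int N}. v (a k * \<beta> powi k) \<le> \<epsilon>"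
      proof
        fix k assume k: "k \<in> {n + 1..int N}"
        have "v (a k) \<le> 1" using assms(8) by (simp add: a_def OP_laurent_def O_P_def)
        moreover have "w powi k \<le> \<epsilon>" unfolding \<epsilon>_def
          using k wpos w1 by (intro power_int_decreasing) auto
        moreover have "0 \<le> w powi k" using wpos by simp
        ultimately have "v (a k) * w powi k \<le> 1 * \<epsilon>"
          using av(6) by (meson mult_mono order_trans zero_le_one)
        thus "v (a k * \<beta> powi k) \<le> \<epsilon>" by (simp add: av av_powi[OF assms(4)] w_def)
      qed
    qed (use epos in auto)
    have "v (P n) = v (P (int N) + (- T))" using split by simp
    also have "\<dots> \<le> max (v (P (int N))) (v (-T))" using assms(6) nonarchimedean_def by blast
    also have "\<dots> \<le> \<epsilon>" using vPN vT av(3) by simp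
    finally show ?thesis by (simp add: \<epsilon>_def)
  qed
  have "h \<in> OP_laurent v"
    unfolding OP_laurent_def O_P_def
  proof (clarsimp simp: hn)
    fix n
    show "v (hf n) \<le> 1"
    proof (cases "n \<ge> d")
      case True
      have "v (hf n) = w powi (-(n+1)) * v (P n)"
        by (simp add: hf_def av av_powi[OF assms(4)] w_def)
      also have "\<dots> \<le> w powi (-(n+1)) * w powi (n+1)"
        using Pbound[OF True] wpos by (intro mult_left_mono) auto
      also have "\<dots> = 1" using wpos by (subst power_int_add[symmetric]) auto
      finally show ?thesis .
    next
      case False then show ?thesis using Pd av by (simp add: hf_def)
    qed
  qed
  moreover have "g = (fls_const \<beta> - fls_X) * h"
  proof (rule fls_eqI)
    fix n
    have "fls_nth ((fls_const \<beta> - fls_X) * h) n = \<beta> * hf n - hf (n - 1)"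
      by (simp add: algebra_simps fls_X_times_conv_shift hn)
    also have "\<dots> = a n"
    proof (cases "n \<ge> d")
      case True
      have "{d..n} = insert n {d..n-1}" using True by auto
      hence "P n = P (n-1) + a n * \<beta> powi n" by (simp add: P_def add.commute)
      moreover have "\<beta> * \<beta> powi (-(n+1)) = \<beta> powi (-n)"
      proof -
        have "\<beta> powi (-(n+1)) = \<beta> powi (-n) * \<beta> powi (-1)"
          by (subst power_int_add[symmetric]) (use False in auto)
        thus ?thesis using False by (simp add: power_int_minus)
      qed
      moreover have "\<beta> powi (-n) * \<beta> powi n = 1"
        using False by (simp add: power_int_minus)
      moreover have "hf (n - 1) = \<beta> powi (-n) * P (n-1)" by (simp add: hf_def)
      moreover have "\<beta> * hf n = (\<beta> * \<beta> powi (-(n+1))) * P n" by (simp add: hf_def)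
      ultimately show ?thesis
        by (simp add: distrib_left)
    next
      case False
      then show ?thesis using Pd by (simp add: hf_def a_def d_def fls_eq0_below_subdegree)
    qed
    finally show "fls_nth g n = fls_nth ((fls_const \<beta> - fls_X) * h) n" by (simp add: a_def)
  qed
  ultimately show ?thesis by blast
qed

end
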